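(* Consider the two-sided GTRS $$\min_{\bm x \in \mathbb{R}^n} \left\{ \bm x^{\top} \bm Q_0 \bm x + \bm q_0^{\top} \bm x + b : b_1^l\le \bm x^{\top} \bm Q_1 \bm x + \bm q_1^{\top} \bm x \le b_1^u \right\},$$ written in matrix form as $\min_{\bm X\in\mathcal{X}}\{\langle \bm A_0,\bm X\rangle : b_1^l\le\langle \bm A_1,\bm X\rangle\le b_1^u,\ X_{11}=1\}$ with $\mathcal{X}:=\{\bm X\in \mathbb{S}_+^{n+1}: \operatorname{rank}(\bm X)\le 1\}$, $\bm A_0 = \begin{pmatrix} b & \bm q_0^{\top}/2\\ \bm q_0/2 & \bm Q_0\end{pmatrix}$, $\bm A_1 = \begin{pmatrix} 0 & \bm q_1^{\top}/2\\ \bm q_1/2 & \bm Q_1\end{pmatrix}$. Let $$\mathcal{C}:=\left\{\bm X\in \mathbb{S}_+^{n+1}: \operatorname{rank}(\bm X)\le 1,\ X_{11}=1,\ b_1^l \le \langle\bm A_1, \bm X\rangle \le b_1^u \right\},\quad \mathcal{C}_{\mathrm{rel}}:=\left\{\bm X\in \mathbb{S}_+^{n+1}: X_{11}=1,\ b_1^l \le \langle\bm A_1, \bm X\rangle \le b_1^u \right\}$$ be the feasible sets of the problem and of its Dantzig-Wolfe relaxation. Then (i) extreme point exactness holds: every extreme point of $\mathcal{C}_{\mathrm{rel}}$ belongs to $\mathcal{C}$; (ii) if $\bm Q_1 \neq \bm 0$ and $-\infty < b_1^l \le b_1^u < +\infty$, convex hull exactness holds: $\mathcal{C}_{\mathrm{rel}}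 = \operatorname{cl}\operatorname{conv}(\mathcal{C})$.
   Context: $\bm Q_0,\bm Q_1$ are symmetric (possibly indefinite) matrices, $-\infty\le b_1^l\le b_1^u\le+\infty$, and the Dantzig-Wolfe relaxation replaces $\mathcal{X}$ by its closed convex hull $\mathbb{S}_+^{n+1}$. $\operatorname{cl}\operatorname{conv}$ denotes the closed convex hull. *)

theory Defs
  imports "HOL-Analysis.Analysis" "HOL-Library.Extended_Real"
begin

text \<open>Matrices in S^(n+1) are indexed by the type 'n option; the index None plays the
role of the first (homogenizing) coordinate, Some i the coordinates of x in R^n, n = CARD('n).\<close>

definition psd :: "real^'m^'m \<Rightarrow> bool" where
  "psd X \<longleftrightarrow> transpose X = X \<and> (\<forall>v. 0 \<le> v \<bullet> (X *v v))"

definition frob :: "real^'m^'m \<Rightarrow> real^'m^'m \<Rightarrow> real" where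
  "frob A X = (\<Sum>i\<in>UNIV. \<Sum>j\<in>UNIV. A $ i $ j * X $ i $ j)"

definition homog_mat :: "real \<Rightarrow> real^'n \<Rightarrow> real^'n^'n \<Rightarrow> real^('n option)^('n option)" where
  "homog_mat c q Q = (\<chi> i j. case (i, j) of
      (None, None) \<Rightarrow> c
    | (None, Some j') \<Rightarrow> q $ j' / 2
    | (Some i', None) \<Rightarrow> q $ i' / 2
    | (Some i', Some j') \<Rightarrow> Q $ i' $ j')"

definition C_set :: "real^'n \<Rightarrow> real^'n^'n \<Rightarrow> ereal \<Rightarrow> ereal \<Rightarrow> (real^('n option)^('n option)) set" where
  "C_set q1 Q1 bl bu = {X. psd X \<and> rank X \<le> 1 \<and> X $ None $ None = 1 \<and>
      bl \<le> ereal (frob (homog_mat 0 q1 Q1) X) \<and> ereal (frob (homog_mat 0 q1 Q1) X) \<le> bu}"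

definition C_rel :: "real^'n \<Rightarrow> real^'n^'n \<Rightarrow> ereal \<Rightarrow> ereal \<Rightarrow> (real^('n option)^('n option)) set" where
  "C_rel q1 Q1 bl bu = {X. psd X \<and> X $ None $ None = 1 \<and>
      bl \<le> ereal (frob (homog_mat 0 q1 Q1) X) \<and> ereal (frob (homog_mat 0 q1 Q1) X) \<le> bu}"

end

theory Submission
  imports Defs
begin



definition outer2 :: "real^'m \<Rightarrow> real^'m \<Rightarrow> real^'m^'m" where
  "outer2 u w = (\<chi> i j. u $ i * w $ j)"

abbreviation outer :: "real^'m \<Rightarrow> real^'m^'m" where "outer u \<equiv> outer2 u u"

lemma outer2_mv: "outer2 u w *v z = (w \<bullet> z) *\<^sub>R u"
  by (simp add: outer2_def matrix_vector_mult_def vec_eq_iff inner_vec_def sum_distrib_left mult_ac)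

lemma quad_outer2: "z \<bullet> (outer2 u w *v z) = (u \<bullet> z) * (w \<bullet> z)"
  by (simp add: outer2_mv inner_commute)

lemma frob_add: "frob A (X + Y) = frob A X + frob A Y"
  by (simp add: frob_def distrib_left sum.distrib)
lemma frob_diff: "frob A (X - Y) = frob A X - frob A Y"
  by (simp add: frob_def right_diff_distrib sum_subtractf)
lemma frob_scale: "frob A (c *\<^sub>R X) = c * frob A X"
  by (simp add: frob_def sum_distrib_left mult_ac)
lemma frob_zero: "frob A 0 = 0"
  by (simp add: frob_def)
lemma frob_outer2: "frob A (outer2 u w) = u \<bullet> (A *v w)"
  by (simp add: frob_def outer2_def matrix_vector_mult_def inner_vec_def sum_distrib_left mult_ac)

lemma quad_add: "z \<bullet> ((X + Y) *v z) = z \<bullet> (X *v z) + z \<bullet> (Y *v z)"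
  by (simp add: matrix_vector_mult_add_rdistrib inner_add_right)
lemma quad_scale: "z \<bullet> ((c *\<^sub>R X) *v z) = c * (z \<bullet> (X *v z))" for X :: "real^'m^'m"
proof -
  have "(c *\<^sub>R X) *v z = c *\<^sub>R (X *v z)"
    by (simp add: vec_eq_iff matrix_vector_mult_def scaleR_sum_right sum_distrib_left mult.assoc)
  then show ?thesis by simp
qed

lemma rank_outer: "rank (outer2 (u::real^'m) u) \<le> 1"
proof -
  have "rows (outer2 u u) \<subseteq> span {u}"
    by (auto simp: rows_def row_def outer2_def span_singleton vec_eq_iff intro!: exI[of _ "u$_"])
  then have "dim (rows (outer2 u u)) \<le> dim {u}"
    by (metis dim_span dim_subset)
  also have "\<dots> \<le> 1" by (simp add: dim_le_card')
  finally show ?thesis by (simp add: row_rank_def)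
qed



lemma disc_le:
  fixes a b c :: real
  assumes h: "\<And>t. 0 \<le> a + 2*b*t + c*t^2"
  shows "b^2 \<le> a*c"
proof (cases "c = 0")
  case True
  show ?thesis
  proof (rule ccontr)
    assume "\<not> ?thesis"
    then have "b \<noteq> 0" using True by auto
    have "0 \<le> a + 2*b*(-(a+1)/(2*b)) + c*(-(a+1)/(2*b))^2" by (rule h)
    also have "\<dots> = -1" using True \<open>b\<noteq>0\<close> by (simp add: field_simps)
    finally show False by simp
  qed
next
  case False
  have c0: "c > 0"
  proof (rule ccontr)
    assume "\<not> c > 0" then have "c < 0" using False by simp
    define t where "t = sqrt ((\<bar>a\<bar> + 1) / (-c))"
    have tt: "t^2 = (\<bar>a\<bar> + 1) / (-c)" unfolding t_def using \<open>c<0\<close>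
      by (intro real_sqrt_pow2 divide_nonneg_pos) auto
    have "0 \<le> a + 2*b*t + c*t^2" "0 \<le> a + 2*b*(-t) + c*(-t)^2" by (rule h)+
    then have "0 \<le> 2*a + 2*c*t^2" by (simp add: power2_eq_square)
    moreover have "c*t^2 = -(\<bar>a\<bar> + 1)" using tt \<open>c<0\<close> by simp
    ultimately show False by linarith
  qed
  have "0 \<le> a + 2*b*(-b/c) + c*(-b/c)^2" by (rule h)
  also have "\<dots> = a - b^2/c" using False by (simp add: field_simps power2_eq_square)
  finally show ?thesis using c0 by (simp add: field_simps)
qed


lemma sym_entry: "transpose X = X \<Longrightarrow> X $ i $ j = X $ j $ i"
  by (metis transpose_def vec_lambda_beta)

lemma quad_sym:
  fixes X :: "real^'m^'m"
  assumes "transpose X = X"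
  shows "x \<bullet> (X *v z) = z \<bullet> (X *v x)"
proof -
  have "x \<bullet> (X *v z) = (\<Sum>i\<in>UNIV. \<Sum>j\<in>UNIV. x$i * X$i$j * z$j)"
    by (simp add: inner_vec_def matrix_vector_mult_def sum_distrib_left mult_ac)
  also have "\<dots> = (\<Sum>j\<in>UNIV. \<Sum>i\<in>UNIV. x$i * X$i$j * z$j)" by (rule sum.swap)
  also have "\<dots> = z \<bullet> (X *v x)"
    using sym_entry[OF assms]
    by (simp add: inner_vec_def matrix_vector_mult_def sum_distrib_left mult_ac)
  finally show ?thesis .
qed

lemma quad_expand:
  fixes X :: "real^'m^'m"
  assumes "transpose X = X"
  shows "(x + t *\<^sub>R z) \<bullet> (X *v (x + t *\<^sub>R z)) =
     x \<bullet> (X *v x) + 2 * (x \<bullet> (X *v z)) * t + (z \<bullet> (X *v z)) * t^2"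
  using quad_sym[OF assms, of z x]
  by (simp add: algebra_simps inner_add_left inner_add_right power2_eq_square)

lemma psd_CS:
  fixes X :: "real^'m^'m"
  assumes "psd X"
  shows "(x \<bullet> (X *v z))^2 \<le> (x \<bullet> (X *v x)) * (z \<bullet> (X *v z))"
proof (rule disc_le)
  fix t
  have "0 \<le> (x + t *\<^sub>R z) \<bullet> (X *v (x + t *\<^sub>R z))" using assms by (simp add: psd_def)
  then show "0 \<le> x \<bullet> (X *v x) + 2 * (x \<bullet> (X *v z)) * t + (z \<bullet> (X *v z)) * t^2"
    using assms by (simp add: psd_def quad_expand)
qed

lemma entry_quad: "X $ i $ j = axis i 1 \<bullet> (X *v axis j 1)"
  by (simp add: matrix_vector_mult_basis column_def inner_commute[of "axis i 1"] inner_axis)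

lemma psd_entry_CS:
  assumes "psd X"
  shows "(X $ i $ j)^2 \<le> X $ i $ i * X $ j $ j"
  using psd_CS[OF assms, of "axis i 1" "axis j 1"] by (simp add: entry_quad[symmetric])

lemma psd_diag_nonneg: "psd X \<Longrightarrow> 0 \<le> X $ i $ i"
  by (metis entry_quad psd_def)


lemma sym_iff: "transpose M = M \<longleftrightarrow> (\<forall>i j. M$i$j = M$j$i)"
  by (auto simp: transpose_def vec_eq_iff)

lemma mv_axis: "(X *v axis k 1) $ i = X $ i $ k" for X :: "real^'m^'m"
  by (simp add: matrix_vector_mult_basis column_def)

lemma outer2_entry[simp]: "outer2 u w $ i $ j = u $ i * w $ j"
  by (simp add: outer2_def)

lemma peel_psd:
  fixes X :: "real^'m^'m"
  assumes X: "psd X" and p: "X $ k $ k > 0"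
  shows "psd (X - (1 / X $ k $ k) *\<^sub>R outer (X *v axis k 1))"
proof -
  let ?p = "X $ k $ k" and ?u = "X *v axis k 1"
  have symX: "transpose X = X" using X by (simp add: psd_def)
  have "transpose (X - (1 / ?p) *\<^sub>R outer ?u) = X - (1 / ?p) *\<^sub>R outer ?u"
    using symX by (simp add: sym_iff mult.commute)
  moreover have "0 \<le> z \<bullet> ((X - (1 / ?p) *\<^sub>R outer ?u) *v z)" for z
  proof -
    have "?u \<bullet> z = axis k 1 \<bullet> (X *v z)" using quad_sym[OF symX, of z "axis k 1"]
      by (simp add: inner_commute)
    then have "(?u \<bullet> z)^2 \<le> ?p * (z \<bullet> (X *v z))"
      using psd_CS[OF X, of "axis k 1" z] by (simp add: entry_quad[symmetric])
    then have "(1/?p) * (?u \<bullet> z)^2 \<le> z \<bullet> (X *v z)" using p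
      by (simp add: field_simps)
    then show ?thesis
      by (simp add: matrix_vector_mult_diff_rdistrib inner_diff_right quad_scale[unfolded] quad_outer2 power2_eq_square
          scaleR_matrix_vector_assoc[symmetric])
  qed
  ultimately show ?thesis by (simp add: psd_def)
qed

lemma psd_zero_diag:
  assumes "psd X" "\<And>i. X $ i $ i = 0" shows "X = 0"
proof -
  have "(X $ i $ j)^2 \<le> 0" for i j using psd_entry_CS[OF assms(1), of i j] assms(2) by simp
  then show ?thesis by (simp add: vec_eq_iff)
qed

lemma quad2_nonneg:
  fixes a e f x y :: real
  assumes "e^2 \<le> f"
  shows "0 \<le> x^2 + 2*e*x*y + f*y^2"
proof -
  have "x^2 + 2*e*x*y + f*y^2 = (x + e*y)^2 + (f - e^2)*y^2" by (simp add: algebra_simps power2_eq_square)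
  also have "\<dots> \<ge> 0" using assms by (intro add_nonneg_nonneg mult_nonneg_nonneg) auto
  finally show ?thesis by simp
qed

lemma small_t:
  fixes p b c :: real
  assumes p: "p > 0"
  shows "\<exists>t>0. \<forall>x y. 0 \<le> x^2 + y^2/p + t*(2*b*x*y + c*y^2) \<and> 0 \<le> x^2 + y^2/p - t*(2*b*x*y + c*y^2)"
proof -
  define K where "K = 2*p*(\<bar>c\<bar>+1) + 2*p*(b^2+1) + 1"
  have K1: "K \<ge> 1" using p by (simp add: K_def)
  have K2: "K \<ge> 2*p*(b^2+1)" "K \<ge> 2*p*(\<bar>c\<bar>+1)" using p by (simp_all add: K_def)
  define t where "t = 1/K"
  have t0: "t > 0" using K1 by (simp add: t_def)
  have tb: "(t*b)^2 \<le> 1/(2*p)"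
  proof -
    have "(t*b)^2 = b^2/K^2" by (simp add: t_def power2_eq_square)
    also have "\<dots> \<le> b^2/K" using K1 by (intro divide_left_mono) (auto simp: power2_eq_square)
    also have "\<dots> \<le> 1/(2*p)" using K2(1) p K1 by (simp add: field_simps)
    finally show ?thesis .
  qed
  have tc: "\<bar>t*c\<bar> \<le> 1/(2*p)"
  proof -
    have "\<bar>t*c\<bar> = \<bar>c\<bar>/K" using t0 by (simp add: t_def abs_mult)
    also have "\<dots> \<le> 1/(2*p)" using K2(2) p K1 by (simp add: field_simps)
    finally show ?thesis .
  qed
  have e1: "(t*b)^2 \<le> 1/p + t*c" and e2: "(-(t*b))^2 \<le> 1/p - t*c"
    using tb tc p by (auto simp: field_simps abs_le_iff)
  show ?thesis
  proof (intro exI[of _ t] conjI allI t0)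
    fix x y
    show "0 \<le> x^2 + y^2/p + t*(2*b*x*y + c*y^2)"
      using quad2_nonneg[OF e1, of x y] by (simp add: algebra_simps)
    show "0 \<le> x^2 + y^2/p - t*(2*b*x*y + c*y^2)"
      using quad2_nonneg[OF e2, of x y] by (simp add: algebra_simps)
  qed
qed

lemma mid_pm: "midpoint (a + d) (a - d) = (a::'a::real_vector)"
proof -
  have "(a + d) + (a - d) = 2 *\<^sub>R a" by (simp add: scaleR_2)
  then show ?thesis by (simp add: midpoint_def)
qed

lemma part1:
  fixes q1 :: "real^'n" and Q1 :: "real^'n^'n" and bl bu :: ereal
  assumes ext: "X extreme_point_of C_rel q1 Q1 bl bu"
  shows "X \<in> C_set q1 Q1 bl bu"
proof -
  let ?A = "homog_mat 0 q1 Q1"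
  have XC: "X \<in> C_rel q1 Q1 bl bu" using ext by (simp add: extreme_point_of_def)
  then have X: "psd X" and XNN: "X $ None $ None = 1" and bl: "bl \<le> ereal (frob ?A X)"
    and bu: "ereal (frob ?A X) \<le> bu" by (auto simp: C_rel_def)
  have symX: "transpose X = X" using X by (simp add: psd_def)
  define u where "u = X *v axis None 1"
  define X1 where "X1 = X - (1 / X $ None $ None) *\<^sub>R outer u"
  have psdX1: "psd X1" unfolding X1_def u_def by (rule peel_psd[OF X]) (simp add: XNN)
  have X1': "X1 = X - outer u" by (simp add: X1_def XNN)
  have "rank X \<le> 1"
  proof (cases "X1 = 0")
    case True
    then have "X = outer u" by (simp add: X1')
    then show ?thesis using rank_outer by metis
  next
    case False
    then obtain j where "X1 $ j $ j \<noteq> 0" using psd_zero_diag[OF psdX1] by blast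
    moreover have "X1 $ j $ j \<ge> 0" by (rule psd_diag_nonneg[OF psdX1])
    ultimately have p: "X1 $ j $ j > 0" by simp
    define p where "p = X1 $ j $ j"
    define w where "w = X1 *v axis j 1"
    define R where "R = X1 - (1 / p) *\<^sub>R outer w"
    have psdR: "psd R" unfolding R_def w_def p_def by (rule peel_psd[OF psdX1 p])
    have pp: "p > 0" using p by (simp add: p_def)
    have uN: "u $ None = 1" by (simp add: u_def mv_axis XNN)
    have ui: "u $ i = X $ i $ None" for i by (simp add: u_def mv_axis)
    have wN: "w $ None = 0"
      using sym_entry[OF symX, of None j] by (simp add: w_def mv_axis X1' ui XNN)
    have wj: "w $ j = p" by (simp add: w_def mv_axis p_def)
    define F1 where "F1 = frob ?A (outer2 u w + outer2 w u)"
    define F2 where "F2 = frob ?A (outer w)"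
    define b where "b = (if F1 = 0 \<and> F2 = 0 then 1 else F2)"
    define c where "c = (if F1 = 0 \<and> F2 = 0 then 0 else - F1)"
    have bc: "b * F1 + c * F2 = 0" by (simp add: b_def c_def)
    have bc0: "b \<noteq> 0 \<or> c \<noteq> 0" by (auto simp: b_def c_def)
    define D where "D = b *\<^sub>R (outer2 u w + outer2 w u) + c *\<^sub>R outer w"
    have symD: "transpose D = D" by (simp add: sym_iff D_def mult.commute)
    have DNN: "D $ None $ None = 0" by (simp add: D_def wN)
    have "frob ?A D = b * F1 + c * F2" by (simp add: D_def frob_add frob_scale F1_def F2_def)
    then have frobD: "frob ?A D = 0" using bc by simp
    have Dne: "D \<noteq> 0"
    proof
      assume D0: "D = 0"
      show False
      proof (cases "b = 0")
        case False
        have "D $ None $ j = b * p" by (simp add: D_def uN wN wj)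
        then show False using D0 False pp by simp
      next
        case True
        then have "c \<noteq> 0" using bc0 by simp
        have "D $ j $ j = c * p * p" using True by (simp add: D_def wj)
        then show False using D0 \<open>c\<noteq>0\<close> pp by simp
      qed
    qed
    have quadD: "z \<bullet> (D *v z) = b * (2 * (u \<bullet> z) * (w \<bullet> z)) + c * (w \<bullet> z)^2" for z
      by (simp add: D_def quad_add quad_scale quad_outer2 power2_eq_square)
    have eqX: "X = R + (1/p) *\<^sub>R outer w + outer u" by (simp add: R_def X1')
    have quadX: "z \<bullet> (X *v z) = z \<bullet> (R *v z) + (w \<bullet> z)^2 / p + (u \<bullet> z)^2" for z
      by (subst eqX) (simp add: quad_add quad_scale quad_outer2 power2_eq_square)
    obtain t where t0: "t > 0" and tq: "\<And>x y. 0 \<le> x^2 + y^2/p + t*(2*b*x*y + c*y^2) \<and> 0 \<le> x^2 + y^2/p - t*(2*b*x*y + c*y^2)"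
      using small_t[OF pp, of b c] by blast
    define Xp where "Xp = X + t *\<^sub>R D"
    define Xm where "Xm = X - t *\<^sub>R D"
    have "psd Xp"
      unfolding psd_def
    proof (intro conjI allI)
      show "transpose Xp = Xp" using symX symD by (simp add: Xp_def sym_iff)
      fix z
      have "z \<bullet> (Xp *v z) = z \<bullet> (R *v z) + ((u \<bullet> z)^2 + (w \<bullet> z)^2/p + t*(2*b*(u \<bullet> z)*(w \<bullet> z) + c*(w \<bullet> z)^2))"
        by (simp add: Xp_def quad_add quad_scale quadX quadD algebra_simps)
      also have "\<dots> \<ge> 0" using psdR tq[of "u \<bullet> z" "w \<bullet> z"] by (simp add: psd_def)
      finally show "0 \<le> z \<bullet> (Xp *v z)" .
    qed
    moreover have "psd Xm"
      unfolding psd_def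
    proof (intro conjI allI)
      show "transpose Xm = Xm" using symX symD by (simp add: Xm_def sym_iff)
      fix z
      have "z \<bullet> (Xm *v z) = z \<bullet> (R *v z) + ((u \<bullet> z)^2 + (w \<bullet> z)^2/p - t*(2*b*(u \<bullet> z)*(w \<bullet> z) + c*(w \<bullet> z)^2))"
        by (simp add: Xm_def matrix_vector_mult_diff_rdistrib inner_diff_right quad_scale quadX quadD algebra_simps)
      also have "\<dots> \<ge> 0" using psdR tq[of "u \<bullet> z" "w \<bullet> z"] by (simp add: psd_def)
      finally show "0 \<le> z \<bullet> (Xm *v z)" .
    qed
    ultimately have inC: "Xp \<in> C_rel q1 Q1 bl bu" "Xm \<in> C_rel q1 Q1 bl bu"
      using XNN bl bu DNN frobD
      by (auto simp: C_rel_def Xp_def Xm_def frob_add frob_diff frob_scale)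
    have "Xp \<noteq> Xm"
    proof
      assume "Xp = Xm"
      then have "X + t *\<^sub>R D - (X - t *\<^sub>R D) = 0" by (simp add: Xp_def Xm_def)
      then have "(t + t) *\<^sub>R D = 0" by (simp only: scaleR_add_left) (simp add: algebra_simps)
      then show False using t0 Dne by (simp only: scaleR_eq_0_iff) simp
    qed
    then have "midpoint Xp Xm \<in> open_segment Xp Xm" by simp
    moreover have "midpoint Xp Xm = X" unfolding Xp_def Xm_def by (rule mid_pm)
    ultimately show ?thesis using ext inC by (auto simp: extreme_point_of_def)
  qed
  then show ?thesis using XC by (simp add: C_rel_def C_set_def)
qed


lemma cont_lin:
  fixes f :: "'a::euclidean_space \<Rightarrow> 'b::real_normed_vector"
  shows "linear f \<Longrightarrow> continuous_on UNIV f"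
  by (simp add: linear_conv_bounded_linear linear_continuous_on)

lemma linear_frob: "linear (frob A)"
  by (rule linearI) (simp_all add: frob_add frob_scale)

lemma linear_quad: "linear (\<lambda>X::real^'m^'m. v \<bullet> (X *v v))"
  by (rule linearI) (simp_all add: quad_add quad_scale)

lemma transpose_add: "transpose (X + Y) = transpose X + transpose (Y::real^'m^'m)"
  by (simp add: transpose_def vec_eq_iff)

lemma linear_transpose: "linear (transpose :: real^'m^'m \<Rightarrow> real^'m^'m)"
  by (rule linearI) (simp_all add: transpose_add transpose_scalar)

lemma linear_entry: "linear (\<lambda>X::real^'m^'m. X $ i $ j)"
  by (rule linearI) simp_all

lemma closed_psd: "closed {X::real^'m^'m. psd X}"
proof -
  have "{X::real^'m^'m. psd X} = {X. transpose X = id X} \<inter> {X. \<forall>v. 0 \<le> v \<bullet> (X *v v)}"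
    by (auto simp: psd_def)
  moreover have "closed {X::real^'m^'m. transpose X = id X}"
    by (intro closed_Collect_eq cont_lin[OF linear_transpose]) (simp add: continuous_on_id)
  moreover have "closed {X::real^'m^'m. \<forall>v. 0 \<le> v \<bullet> (X *v v)}"
    by (intro closed_Collect_all closed_Collect_le cont_lin linear_quad continuous_on_const)
  ultimately show ?thesis by auto
qed

lemma closed_ereal_ge:
  assumes "continuous_on UNIV f" shows "closed {x. bl \<le> ereal (f x)}"
proof (cases bl)
  case (real r)
  then show ?thesis using assms by (simp add: closed_Collect_le continuous_on_const)
qed simp_all

lemma closed_ereal_le:
  assumes "continuous_on UNIV f" shows "closed {x. ereal (f x) \<le> bu}"
proof (cases bu)
  case (real r)
  then show ?thesis using assms by (simp add: closed_Collect_le continuous_on_const)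
qed simp_all

lemma closed_C_rel: "closed (C_rel q1 Q1 bl bu)" for q1 :: "real^'n"
proof -
  have "C_rel q1 Q1 bl bu = {X. psd X} \<inter> {X. X $ None $ None = 1} \<inter>
     {X. bl \<le> ereal (frob (homog_mat 0 q1 Q1) X)} \<inter> {X. ereal (frob (homog_mat 0 q1 Q1) X) \<le> bu}"
    by (auto simp: C_rel_def)
  moreover have "closed {X::real^('n option)^('n option). X $ None $ None = 1}"
    by (intro closed_Collect_eq cont_lin linear_entry continuous_on_const)
  ultimately show ?thesis
    by (auto intro!: closed_Int closed_psd closed_ereal_ge closed_ereal_le cont_lin linear_frob)
qed

lemma ereal_ge_convex:
  assumes "bl \<le> ereal a" "bl \<le> ereal b" "0 \<le> u" "0 \<le> v" "u + v = 1"
  shows "bl \<le> ereal (u * a + v * b)"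
proof (cases bl)
  case (real r)
  then have "r \<le> a" "r \<le> b" using assms by auto
  then have "u * r + v * r \<le> u * a + v * b" using assms by (intro add_mono mult_left_mono) auto
  then show ?thesis using real assms by (simp add: distrib_right[symmetric])
qed (use assms in auto)

lemma ereal_le_convex:
  assumes "ereal a \<le> bu" "ereal b \<le> bu" "0 \<le> u" "0 \<le> v" "u + v = 1"
  shows "ereal (u * a + v * b) \<le> bu"
proof (cases bu)
  case (real r)
  then have "a \<le> r" "b \<le> r" using assms by auto
  then have "u * a + v * b \<le> u * r + v * r" using assms by (intro add_mono mult_left_mono) auto
  then show ?thesis using real assms by (simp add: distrib_right[symmetric])
qed (use assms in auto)

lemma convex_C_rel: "convex (C_rel q1 Q1 bl bu)" for q1 :: "real^'n"
  unfolding convex_def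
proof (intro ballI allI impI)
  fix X Y :: "real^('n option)^('n option)" and u v :: real
  assume X: "X \<in> C_rel q1 Q1 bl bu" and Y: "Y \<in> C_rel q1 Q1 bl bu" and uv: "0 \<le> u" "0 \<le> v" "u + v = 1"
  have "psd (u *\<^sub>R X + v *\<^sub>R Y)"
    using X Y uv by (auto simp: psd_def C_rel_def transpose_add transpose_scalar quad_add quad_scale)
  then show "u *\<^sub>R X + v *\<^sub>R Y \<in> C_rel q1 Q1 bl bu"
    using X Y uv by (auto simp: C_rel_def frob_add frob_scale intro!: ereal_ge_convex ereal_le_convex)
qed

lemma C_sub: "C_set q1 Q1 bl bu \<subseteq> C_rel q1 Q1 bl bu"
  by (auto simp: C_set_def C_rel_def)

lemma part2_sup: "closure (convex hull (C_set q1 Q1 bl bu)) \<subseteq> C_rel q1 Q1 bl bu"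
  by (intro closure_minimal hull_minimal C_sub convex_C_rel closed_C_rel)


lemma outer_scale: "outer (c *\<^sub>R u) = (c^2) *\<^sub>R outer (u::real^'m)"
  by (simp add: vec_eq_iff outer2_def power2_eq_square mult_ac)

lemma psd_dec:
  fixes X :: "real^'m^'m"
  assumes "psd X"
  shows "\<exists>ps. X = sum_list (map outer ps)"
  using assms
proof (induction "card {i. X$i$i \<noteq> 0}" arbitrary: X rule: less_induct)
  case less
  show ?case
  proof (cases "\<forall>i. X$i$i = 0")
    case True
    then have "X = 0" using psd_zero_diag[OF less.prems] by blast
    then show ?thesis by (intro exI[of _ "[]"]) simp
  next
    case False
    then obtain k where "X$k$k \<noteq> 0" by blast
    moreover have "X$k$k \<ge> 0" by (rule psd_diag_nonneg[OF less.prems])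
    ultimately have p: "X$k$k > 0" by simp
    define u where "u = X *v axis k 1"
    define X' where "X' = X - (1 / X$k$k) *\<^sub>R outer u"
    have psd': "psd X'" unfolding X'_def u_def by (rule peel_psd[OF less.prems p])
    have ui: "u $ i = X $ i $ k" for i by (simp add: u_def mv_axis)
    have symX: "transpose X = X" using less.prems by (simp add: psd_def)
    have sub: "{i. X'$i$i \<noteq> 0} \<subset> {i. X$i$i \<noteq> 0}"
    proof
      show "{i. X'$i$i \<noteq> 0} \<subseteq> {i. X$i$i \<noteq> 0}"
      proof
        fix i assume "i \<in> {i. X'$i$i \<noteq> 0}"
        then have ne: "X'$i$i \<noteq> 0" by simp
        show "i \<in> {i. X$i$i \<noteq> 0}"
        proof (rule ccontr)
          assume "i \<notin> {i. X$i$i \<noteq> 0}"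
          then have "X$i$i = 0" by simp
          moreover have "(X$i$k)^2 \<le> X$i$i * X$k$k" by (rule psd_entry_CS[OF less.prems])
          ultimately have "X$i$k = 0" by simp
          then show False using ne \<open>X$i$i = 0\<close> by (simp add: X'_def ui)
        qed
      qed
      have "X'$k$k = X$k$k - (1 / X$k$k) * (X$k$k * X$k$k)" by (simp add: X'_def ui)
      also have "\<dots> = 0" using p by simp
      finally have "X'$k$k = 0" .
      then have "k \<notin> {i. X'$i$i \<noteq> 0}" by simp
      moreover have "k \<in> {i. X$i$i \<noteq> 0}" using p by simp
      ultimately show "{i. X'$i$i \<noteq> 0} \<noteq> {i. X$i$i \<noteq> 0}" by blast
    qed
    then have "card {i. X'$i$i \<noteq> 0} < card {i. X$i$i \<noteq> 0}"
      by (intro psubset_card_mono) simp_all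
    then obtain ps where ps: "X' = sum_list (map outer ps)" using less.hyps psd' by blast
    define c where "c = sqrt (1 / X$k$k)"
    have c2: "c^2 = 1 / X$k$k" using p by (simp add: c_def)
    have "X = X' + outer (c *\<^sub>R u)" by (simp add: outer_scale c2 X'_def)
    then show ?thesis using ps by (intro exI[of _ "(c *\<^sub>R u) # ps"]) simp
  qed
qed


lemma outer2_add1: "outer2 (a + b) w = outer2 a w + outer2 b w"
  by (simp add: vec_eq_iff outer2_def distrib_right)
lemma outer2_add2: "outer2 w (a + b) = outer2 w a + outer2 w b"
  by (simp add: vec_eq_iff outer2_def distrib_left)
lemma outer2_scale1: "outer2 (c *\<^sub>R a) w = c *\<^sub>R outer2 a w"
  by (simp add: vec_eq_iff outer2_def mult_ac)
lemma outer2_scale2: "outer2 w (c *\<^sub>R a) = c *\<^sub>R outer2 w a"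
  by (simp add: vec_eq_iff outer2_def mult_ac)

lemma quad_root:
  fixes a b c :: real
  assumes "a * c < 0"
  shows "\<exists>t. a + b * t + c * t^2 = 0"
proof -
  have c0: "c \<noteq> 0" using assms by auto
  have "0 \<le> b^2" by simp
  then have d: "b^2 - 4*a*c \<ge> 0" using assms by linarith
  define s where "s = sqrt (b^2 - 4*a*c)"
  have s2: "s^2 = b^2 - 4*a*c" using d by (simp add: s_def)
  define t where "t = (s - b) / (2*c)"
  have "a + b * t + c * t^2 = (s^2 - b^2 + 4*a*c) / (4*c)"
    using c0 by (simp add: t_def field_simps power2_eq_square)
  also have "\<dots> = 0" using s2 by simp
  finally show ?thesis by blast
qed

lemma rotate_outer:
  fixes p q :: "real^'m" and t :: real
  defines "k \<equiv> 1 / sqrt (1 + t^2)"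
  shows "outer (k *\<^sub>R (p + t *\<^sub>R q)) + outer (k *\<^sub>R (q - t *\<^sub>R p)) = outer p + outer q"
proof -
  have pos: "1 + t^2 > 0" by (simp add: add_pos_nonneg)
  have k2: "k^2 = 1 / (1 + t^2)" using pos by (simp add: k_def power_divide)
  have e: "(p$i + t * q$i) * (p$j + t * q$j) + (q$i - t * p$i) * (q$j - t * p$j) = (1 + t^2) * (p$i * p$j + q$i * q$j)" for i j
    by (simp add: algebra_simps power2_eq_square)
  have "k^2 * (1 + t^2) = 1" using pos k2 by simp
  then show ?thesis
    unfolding outer_scale
    by (simp add: vec_eq_iff outer2_def distrib_left[symmetric] e)
qed


lemma SZ:
  fixes G :: "real^'m^'m" and ps :: "(real^'m) list"
  assumes "sum_list (map (\<lambda>v. frob G (outer v)) ps) = 0"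
  shows "\<exists>qs. sum_list (map outer qs) = sum_list (map outer ps) \<and> (\<forall>q\<in>set qs. frob G (outer q) = 0)"
  using assms
proof (induction "length ps" arbitrary: ps rule: less_induct)
  case less
  define \<phi> where "\<phi> = (\<lambda>v. frob G (outer v))"
  show ?case
  proof (cases ps)
    case Nil
    then show ?thesis by (intro exI[of _ "[]"]) simp
  next
    case (Cons p rest)
    show ?thesis
    proof (cases "\<phi> p = 0")
      case True
      then have "sum_list (map (\<lambda>v. frob G (outer v)) rest) = 0"
        using less.prems Cons by (simp add: \<phi>_def)
      then obtain qs where "sum_list (map outer qs) = sum_list (map outer rest)" "\<forall>q\<in>set qs. frob G (outer q) = 0"
        using less.hyps[of rest] Cons by auto
      then show ?thesis using True Cons by (intro exI[of _ "p # qs"]) (simp add: \<phi>_def)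
    next
      case False
      have srest: "sum_list (map \<phi> rest) = - \<phi> p" using less.prems Cons by (simp add: \<phi>_def)
      have "\<exists>q\<in>set rest. \<phi> p * \<phi> q < 0"
      proof (rule ccontr)
        assume "\<not> ?thesis"
        then have "\<forall>q\<in>set rest. 0 \<le> \<phi> p * \<phi> q" by auto
        then have "0 \<le> sum_list (map (\<lambda>q. \<phi> p * \<phi> q) rest)"
          by (intro sum_list_nonneg) auto
        also have "sum_list (map (\<lambda>q. \<phi> p * \<phi> q) rest) = \<phi> p * sum_list (map \<phi> rest)"
          by (simp add: sum_list_const_mult)
        finally have "0 \<le> - (\<phi> p * \<phi> p)" using srest by simp
        moreover have "\<phi> p * \<phi> p > 0" by (metis False linorder_neqE_linordered_idom mult_neg_neg mult_pos_pos)
        ultimately show False by linarith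
      qed
      then obtain q where q: "q \<in> set rest" and pq: "\<phi> p * \<phi> q < 0" by blast
      then obtain r1 r2 where rest: "rest = r1 @ q # r2" by (meson split_list)
      define \<beta> where "\<beta> = frob G (outer2 p q) + frob G (outer2 q p)"
      obtain t where t: "\<phi> p + \<beta> * t + \<phi> q * t^2 = 0" using quad_root[OF pq] by blast
      define k where "k = 1 / sqrt (1 + t^2)"
      define v where "v = k *\<^sub>R (p + t *\<^sub>R q)"
      define w where "w = k *\<^sub>R (q - t *\<^sub>R p)"
      have rot: "outer v + outer w = outer p + outer q" unfolding v_def w_def k_def by (rule rotate_outer)
      have "\<phi> (p + t *\<^sub>R q) = \<phi> p + \<beta> * t + \<phi> q * t^2"
        by (simp add: \<phi>_def \<beta>_def outer2_add1 outer2_add2 outer2_scale1 outer2_scale2 frob_add frob_scale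
            algebra_simps power2_eq_square)
      then have phv: "\<phi> v = 0" using t by (simp add: v_def \<phi>_def outer_scale frob_scale)
      have phw: "\<phi> w = \<phi> p + \<phi> q"
      proof -
        have "\<phi> v + \<phi> w = \<phi> p + \<phi> q" unfolding \<phi>_def frob_add[symmetric] rot ..
        then show ?thesis using phv by simp
      qed
      define L where "L = w # r1 @ r2"
      have "length L < length ps" using Cons rest by (simp add: L_def)
      moreover have "sum_list (map (\<lambda>v. frob G (outer v)) L) = 0"
        using srest phw rest by (simp add: L_def \<phi>_def)
      ultimately obtain qs where qs: "sum_list (map outer qs) = sum_list (map outer L)" "\<forall>q\<in>set qs. frob G (outer q) = 0"
        using less.hyps by blast
      have "sum_list (map outer (v # qs)) = sum_list (map outer ps)"
        using qs(1) rot Cons rest by (simp add: L_def algebra_simps)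
      moreover have "\<forall>q\<in>set (v # qs). frob G (outer q) = 0" using qs(2) phv by (simp add: \<phi>_def)
      ultimately show ?thesis by blast
    qed
  qed
qed


definition tl_v :: "real^('n option) \<Rightarrow> real^'n" where "tl_v v = (\<chi> j. v $ Some j)"
definition hom :: "real \<Rightarrow> real^'n \<Rightarrow> real^('n option)" where
  "hom a x = (\<chi> i. case i of None \<Rightarrow> a | Some j \<Rightarrow> x $ j)"

lemma hom_None[simp]: "hom a x $ None = a" and hom_Some[simp]: "hom a x $ Some j = x $ j"
  by (simp_all add: hom_def)
lemma tl_v_nth[simp]: "tl_v v $ j = v $ Some j" by (simp add: tl_v_def)
lemma tl_hom[simp]: "tl_v (hom a x) = x" by (simp add: vec_eq_iff)
lemma hom_tl: "hom (v $ None) (tl_v v) = v"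
  by (simp add: vec_eq_iff hom_def split: option.split)
lemma hom_scale: "c *\<^sub>R hom a x = hom (c * a) (c *\<^sub>R x)"
  by (simp add: vec_eq_iff hom_def split: option.split)

lemma sum_option: "(\<Sum>i\<in>(UNIV::'n::finite option set). f i) = f None + (\<Sum>j\<in>UNIV. f (Some j))"
proof -
  have "(\<Sum>i\<in>(UNIV::'n option set). f i) = (\<Sum>i\<in>insert None (range Some). f i)" by (simp add: UNIV_option_conv)
  also have "\<dots> = f None + (\<Sum>i\<in>range Some. f i)" by (subst sum.insert) auto
  also have "(\<Sum>i\<in>range Some. f i) = (\<Sum>j\<in>UNIV. f (Some j))" by (subst sum.reindex) (auto simp: inj_on_def)
  finally show ?thesis .
qed

lemma frob_hom:
  fixes q :: "real^'n" and Q :: "real^'n^'n" and v :: "real^('n option)"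
  shows "frob (homog_mat c q Q) (outer v) = c * (v$None)^2 + v$None * (q \<bullet> tl_v v) + tl_v v \<bullet> (Q *v tl_v v)"
proof -
  have "frob (homog_mat c q Q) (outer v) =
     c * (v$None)^2 + (\<Sum>j\<in>UNIV. q$j/2 * (v$None * v$Some j)) +
     (\<Sum>i\<in>UNIV. q$i/2 * (v$Some i * v$None) + (\<Sum>j\<in>UNIV. Q$i$j * (v$Some i * v$Some j)))"
    by (simp add: frob_def sum_option homog_mat_def power2_eq_square)
  also have "\<dots> = c * (v$None)^2 + v$None * (q \<bullet> tl_v v) + tl_v v \<bullet> (Q *v tl_v v)"
    by (simp add: sum.distrib inner_vec_def matrix_vector_mult_def sum_distrib_left sum_divide_distrib[symmetric]
        algebra_simps)
  finally show ?thesis .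
qed


lemma psd_outer: "psd (outer v)"
  by (simp add: psd_def sym_iff mult.commute quad_outer2)

lemma g_hom: "frob (homog_mat 0 q1 Q1) (outer (hom 1 x)) = q1 \<bullet> x + x \<bullet> (Q1 *v x)"
  by (simp add: frob_hom)

lemma hom_in_C:
  assumes "bl \<le> ereal (q1 \<bullet> x + x \<bullet> (Q1 *v x))" "ereal (q1 \<bullet> x + x \<bullet> (Q1 *v x)) \<le> bu"
  shows "outer (hom 1 x) \<in> C_set q1 Q1 bl bu"
  using assms rank_outer[of "hom 1 x"] by (simp add: C_set_def psd_outer g_hom)

lemma outer_tendsto:
  fixes f :: "'a \<Rightarrow> real^'m"
  assumes "(f \<longlongrightarrow> a) F"
  shows "((\<lambda>k. outer (f k)) \<longlongrightarrow> outer a) F"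
  by (intro vec_tendstoI) (simp add: outer2_def tendsto_intros assms)

lemma hom_tendsto:
  fixes g :: "'a \<Rightarrow> real^'n::finite"
  assumes "(f \<longlongrightarrow> a) F" "(g \<longlongrightarrow> x) F"
  shows "((\<lambda>k. hom (f k) (g k)) \<longlongrightarrow> hom a x) F"
proof (intro vec_tendstoI)
  fix i
  show "((\<lambda>k. hom (f k) (g k) $ i) \<longlongrightarrow> hom a x $ i) F"
    by (cases i) (simp_all add: assms tendsto_vec_nth)
qed

lemma REC:
  fixes y :: "nat \<Rightarrow> real^'n" and S :: "(real^('n option)^('n option)) set"
  assumes S: "closed S" "convex S" "C_set q1 Q1 bl bu \<subseteq> S" and Z: "Z \<in> S"
    and ev: "eventually (\<lambda>k. outer (hom 1 (y k)) \<in> C_set q1 Q1 bl bu) sequentially"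
    and s: "((\<lambda>k. 1 / s k) \<longlongrightarrow> 0) sequentially"
    and yw: "((\<lambda>k. (1 / s k) *\<^sub>R y k) \<longlongrightarrow> w) sequentially"
  shows "Z + outer (hom 0 w) \<in> S"
proof -
  define \<mu> where "\<mu> k = (1 / s k)^2" for k
  define f where "f k = (1 - \<mu> k) *\<^sub>R Z + outer (hom (1 / s k) ((1 / s k) *\<^sub>R y k))" for k
  have eq: "outer (hom (1 / s k) ((1 / s k) *\<^sub>R y k)) = \<mu> k *\<^sub>R outer (hom 1 (y k))" for k
  proof -
    have "hom (1 / s k) ((1 / s k) *\<^sub>R y k) = (1 / s k) *\<^sub>R hom 1 (y k)" by (simp add: hom_scale)
    then show ?thesis by (simp add: outer_scale \<mu>_def)
  qed
  have "eventually (\<lambda>k. dist (1 / s k) 0 < 1) sequentially" using tendstoD[OF s] by simp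
  then have ev\<mu>: "eventually (\<lambda>k. \<mu> k \<le> 1) sequentially"
    by eventually_elim (simp add: \<mu>_def abs_square_le_1)
  have "eventually (\<lambda>k. f k \<in> S) sequentially"
    using ev ev\<mu>
  proof eventually_elim
    case (elim k)
    have "(1 - \<mu> k) *\<^sub>R Z + \<mu> k *\<^sub>R outer (hom 1 (y k)) \<in> S"
      using S(2) Z elim S(3) unfolding convex_def by (auto simp: \<mu>_def)
    then show ?case by (simp add: f_def eq)
  qed
  moreover have "(f \<longlongrightarrow> (1 - 0) *\<^sub>R Z + outer (hom 0 w)) sequentially"
  proof -
    have "(\<mu> \<longlongrightarrow> 0) sequentially" unfolding \<mu>_def using tendsto_power[OF s, of 2] by simp
    then show ?thesis unfolding f_def
      by (intro tendsto_intros outer_tendsto hom_tendsto s yw)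
  qed
  ultimately show ?thesis using S(1) by (intro Lim_in_closed_set[of S f]) auto
qed


lemma g_add:
  fixes Q :: "real^'n^'n"
  assumes "transpose Q = Q"
  shows "q \<bullet> (a + b) + (a + b) \<bullet> (Q *v (a + b)) = (q \<bullet> a + a \<bullet> (Q *v a)) + (q \<bullet> b + b \<bullet> (Q *v b)) + 2 * (a \<bullet> (Q *v b))"
  using quad_sym[OF assms, of b a]
  by (simp add: matrix_vector_right_distrib inner_add_left inner_add_right)

lemma g_scale:
  fixes Q :: "real^'n^'n"
  shows "q \<bullet> (t *\<^sub>R a) + (t *\<^sub>R a) \<bullet> (Q *v (t *\<^sub>R a)) = t * (q \<bullet> a) + t^2 * (a \<bullet> (Q *v a))"
  by (simp add: matrix_vector_mult_scaleR power2_eq_square)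

lemma B_scale:
  fixes Q :: "real^'n^'n"
  shows "(s *\<^sub>R a) \<bullet> (Q *v (t *\<^sub>R b)) = s * t * (a \<bullet> (Q *v b))"
  by (simp add: matrix_vector_mult_scaleR)

lemma B_add2:
  fixes Q :: "real^'n^'n"
  shows "a \<bullet> (Q *v (b + c)) = a \<bullet> (Q *v b) + a \<bullet> (Q *v c)"
  by (simp add: matrix_vector_right_distrib inner_add_right)

lemma B_diff2:
  fixes Q :: "real^'n^'n"
  shows "a \<bullet> (Q *v (b - c)) = a \<bullet> (Q *v b) - a \<bullet> (Q *v c)"
  by (simp add: matrix_vector_mult_diff_distrib inner_diff_right)

lemma B_diff1:
  fixes Q :: "real^'n^'n"
  shows "(b - c) \<bullet> (Q *v a) = b \<bullet> (Q *v a) - c \<bullet> (Q *v a)"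
  by (simp add: inner_diff_left)

lemma polar:
  fixes Q :: "real^'n^'n"
  assumes "transpose Q = Q" "Q \<noteq> 0"
  shows "\<exists>e. e \<bullet> (Q *v e) \<noteq> 0"
proof (rule ccontr)
  assume "\<not> ?thesis"
  then have z: "\<And>e. e \<bullet> (Q *v e) = 0" by auto
  have "a \<bullet> (Q *v b) = 0" for a b
    using g_add[OF assms(1), of 0 a b] z[of a] z[of b] z[of "a + b"] by simp
  then have "Q $ i $ j = 0" for i j by (simp add: entry_quad)
  then show False using assms(2) by (simp add: vec_eq_iff)
qed


lemma asym_a:
  fixes Q :: "real^'n^'n" and q d y0 :: "real^'n"
  assumes sym: "transpose Q = Q" and Bd: "\<And>v. d \<bullet> (Q *v v) = 0" and qd: "q \<bullet> d = 0"
  shows "\<exists>y s w. eventually (\<lambda>k. q \<bullet> y k + y k \<bullet> (Q *v y k) = q \<bullet> y0 + y0 \<bullet> (Q *v y0)) sequentially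
     \<and> ((\<lambda>k. 1 / s k) \<longlongrightarrow> 0) sequentially \<and> ((\<lambda>k. (1 / s k) *\<^sub>R y k) \<longlongrightarrow> w) sequentially
     \<and> outer (hom 0 w) = outer (hom 0 d)"
proof (intro exI conjI)
  let ?y = "\<lambda>k::nat. y0 + real k *\<^sub>R d"
  have "y0 \<bullet> (Q *v d) = 0" using Bd[of y0] quad_sym[OF sym, of y0 d] by simp
  then show "eventually (\<lambda>k. q \<bullet> ?y k + ?y k \<bullet> (Q *v ?y k) = q \<bullet> y0 + y0 \<bullet> (Q *v y0)) sequentially"
    using Bd[of d] qd by (simp add: g_add[OF sym] g_scale matrix_vector_mult_scaleR)
  show "((\<lambda>k. 1 / real k) \<longlongrightarrow> 0) sequentially" by (rule lim_1_over_n)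
  have "((\<lambda>k. (1 / real k) *\<^sub>R y0 + d) \<longlongrightarrow> 0 *\<^sub>R y0 + d) sequentially"
    by (intro tendsto_intros lim_1_over_n)
  moreover have "eventually (\<lambda>k. (1 / real k) *\<^sub>R y0 + d = (1 / real k) *\<^sub>R ?y k) sequentially"
    using eventually_gt_at_top[of 0] by eventually_elim (simp add: scaleR_add_right)
  ultimately show "((\<lambda>k. (1 / real k) *\<^sub>R ?y k) \<longlongrightarrow> d) sequentially"
    using tendsto_cong by fastforce
qed simp


lemma div_aux: "(k::real) \<noteq> 0 \<Longrightarrow> b \<noteq> 0 \<Longrightarrow> (a / (k * k)) / (b / k) = (a / b) / k"
  by (simp add: field_simps)

lemma asym_b:
  fixes Q :: "real^'n^'n" and q d v :: "real^'n"
  assumes sym: "transpose Q = Q" and dd: "d \<bullet> (Q *v d) = 0" and \<beta>: "d \<bullet> (Q *v v) \<noteq> 0"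
  shows "\<exists>y s w. eventually (\<lambda>k. q \<bullet> y k + y k \<bullet> (Q *v y k) = c) sequentially
     \<and> ((\<lambda>k. 1 / s k) \<longlongrightarrow> 0) sequentially \<and> ((\<lambda>k. (1 / s k) *\<^sub>R y k) \<longlongrightarrow> w) sequentially
     \<and> outer (hom 0 w) = outer (hom 0 d)"
proof -
  define \<beta> where "\<beta> = d \<bullet> (Q *v v)"
  have b0: "\<beta> \<noteq> 0" using \<beta> by (simp add: \<beta>_def)
  define lam where "lam = (v \<bullet> (Q *v v)) / (2 * \<beta>)"
  define e where "e = v - lam *\<^sub>R d"
  have vd: "v \<bullet> (Q *v d) = \<beta>" using quad_sym[OF sym, of v d] by (simp add: \<beta>_def)
  have ee: "e \<bullet> (Q *v e) = 0"
    unfolding e_def using dd vd b0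
    by (simp add: B_diff2 B_diff1 matrix_vector_mult_scaleR \<beta>_def[symmetric] lam_def field_simps)
  have de: "d \<bullet> (Q *v e) = \<beta>"
    unfolding e_def using dd by (simp add: B_diff2 matrix_vector_mult_scaleR \<beta>_def)
  define \<delta> where "\<delta> = q \<bullet> d"
  define \<epsilon> where "\<epsilon> = q \<bullet> e"
  define r where "r k = (c - real k * \<delta>) / (2 * real k * \<beta> + \<epsilon>)" for k :: nat
  define y where "y k = real k *\<^sub>R d + r k *\<^sub>R e" for k :: nat
  obtain N :: nat where N: "real N > \<bar>\<epsilon>\<bar> / \<bar>\<beta>\<bar>" using reals_Archimedean2 by blast
  have evden: "eventually (\<lambda>k. 2 * real k * \<beta> + \<epsilon> \<noteq> 0) sequentially"
    unfolding eventually_sequentially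
  proof (intro exI allI impI)
    fix k assume "N \<le> k"
    then have "real k > \<bar>\<epsilon>\<bar> / \<bar>\<beta>\<bar>" using N by linarith
    then have "real k * \<bar>\<beta>\<bar> > \<bar>\<epsilon>\<bar>" using b0 by (simp add: field_simps)
    then have "\<bar>2 * real k * \<beta>\<bar> > \<bar>\<epsilon>\<bar>" by (simp add: abs_mult)
    then show "2 * real k * \<beta> + \<epsilon> \<noteq> 0" by linarith
  qed
  have g: "eventually (\<lambda>k. q \<bullet> y k + y k \<bullet> (Q *v y k) = c) sequentially"
    using evden
  proof eventually_elim
    case (elim k)
    have "q \<bullet> y k + y k \<bullet> (Q *v y k) = real k * \<delta> + r k * (2 * real k * \<beta> + \<epsilon>)"
      unfolding y_def using dd ee de quad_sym[OF sym, of e d]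
      by (simp add: g_add[OF sym] g_scale B_scale \<delta>_def \<epsilon>_def algebra_simps)
    also have "\<dots> = c" using elim by (simp add: r_def)
    finally show ?case .
  qed
  have lim_r: "((\<lambda>k. r k / real k) \<longlongrightarrow> 0) sequentially"
  proof -
    have "((\<lambda>k. (c * (1 / real k)^2 - \<delta> * (1 / real k)) / (2 * \<beta> + \<epsilon> * (1 / real k)))
        \<longlongrightarrow> (c * 0^2 - \<delta> * 0) / (2 * \<beta> + \<epsilon> * 0)) sequentially"
      using b0 by (intro tendsto_intros lim_1_over_n) simp
    moreover have "eventually (\<lambda>k. (c * (1 / real k)^2 - \<delta> * (1 / real k)) / (2 * \<beta> + \<epsilon> * (1 / real k)) = r k / real k) sequentially"
      using evden eventually_gt_at_top[of 0]
    proof eventually_elim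
      case (elim k)
      then have k0: "real k \<noteq> 0" by simp
      have "2 * \<beta> + \<epsilon> * (1 / real k) = (2 * real k * \<beta> + \<epsilon>) / real k" using k0 by (simp add: field_simps)
      moreover have "c * (1 / real k)^2 - \<delta> * (1 / real k) = (c - real k * \<delta>) / (real k * real k)"
        using k0 by (simp add: field_simps power2_eq_square)
      moreover have "((c - real k * \<delta>) / (real k * real k)) / ((2 * real k * \<beta> + \<epsilon>) / real k) = r k / real k"
        unfolding r_def by (rule div_aux[OF k0 elim(1)])
      ultimately show ?case by simp
    qed
    ultimately show ?thesis using tendsto_cong by fastforce
  qed
  have lim_y: "((\<lambda>k. (1 / real k) *\<^sub>R y k) \<longlongrightarrow> d) sequentially"
  proof -
    have "((\<lambda>k. d + (r k / real k) *\<^sub>R e) \<longlongrightarrow> d + 0 *\<^sub>R e) sequentially"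
      by (intro tendsto_intros lim_r)
    moreover have "eventually (\<lambda>k. d + (r k / real k) *\<^sub>R e = (1 / real k) *\<^sub>R y k) sequentially"
      using eventually_gt_at_top[of 0] by eventually_elim (simp add: y_def scaleR_add_right)
    ultimately show ?thesis using tendsto_cong by fastforce
  qed
  show ?thesis using g lim_1_over_n lim_y by blast
qed


lemma asym_c:
  fixes Q :: "real^'n^'n" and q d e :: "real^'n"
  assumes sym: "transpose Q = Q" and Bd: "\<And>v. d \<bullet> (Q *v v) = 0" and qd: "q \<bullet> d \<noteq> 0"
    and ae: "e \<bullet> (Q *v e) \<noteq> 0"
  shows "\<exists>y s w. eventually (\<lambda>k. q \<bullet> y k + y k \<bullet> (Q *v y k) = c) sequentially
     \<and> ((\<lambda>k. 1 / s k) \<longlongrightarrow> 0) sequentially \<and> ((\<lambda>k. (1 / s k) *\<^sub>R y k) \<longlongrightarrow> w) sequentially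
     \<and> outer (hom 0 w) = outer (hom 0 d)"
proof -
  define a where "a = e \<bullet> (Q *v e)"
  define b where "b = q \<bullet> e"
  define \<delta> where "\<delta> = q \<bullet> d"
  define \<sigma> :: real where "\<sigma> = (if a * \<delta> > 0 then -1 else 1)"
  have a0: "a \<noteq> 0" and d0: "\<delta> \<noteq> 0" using ae qd by (simp_all add: a_def \<delta>_def)
  have s2: "\<sigma> * \<sigma> = 1" by (simp add: \<sigma>_def)
  have sd0: "\<sigma> * \<delta> \<noteq> 0" using d0 by (simp add: \<sigma>_def)
  have neg: "\<sigma> * a * \<delta> < 0"
  proof (cases "a * \<delta> > 0")
    case True then show ?thesis by (simp add: \<sigma>_def)
  next
    case False
    moreover have "a * \<delta> \<noteq> 0" using a0 d0 by simp
    ultimately have "a * \<delta> < 0" by linarith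
    then show ?thesis using False by (simp add: \<sigma>_def)
  qed
  define \<kappa> where "\<kappa> = - a / (\<sigma> * \<delta>)"
  have \<kappa>0: "\<kappa> > 0"
  proof -
    have "a * (\<sigma> * \<delta>) < 0" using neg by (simp add: mult_ac)
    then show ?thesis unfolding \<kappa>_def zero_less_divide_iff mult_less_0_iff by auto
  qed
  define s where "s k = (c - a * (real k)^2 - b * real k) / (\<sigma> * \<delta>)" for k :: nat
  define y where "y k = (s k * \<sigma>) *\<^sub>R d + real k *\<^sub>R e" for k :: nat
  have de: "d \<bullet> (Q *v e) = 0" "d \<bullet> (Q *v d) = 0" "e \<bullet> (Q *v d) = 0"
    using Bd quad_sym[OF sym, of e d] by auto
  have g: "eventually (\<lambda>k. q \<bullet> y k + y k \<bullet> (Q *v y k) = c) sequentially"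
  proof (intro always_eventually allI)
    fix k
    have "q \<bullet> y k + y k \<bullet> (Q *v y k) = s k * (\<sigma> * \<delta>) + real k * b + (real k)^2 * a"
      unfolding y_def using de
      by (simp add: g_add[OF sym] g_scale B_scale \<delta>_def a_def b_def algebra_simps power2_eq_square)
    also have "\<dots> = c" using sd0 by (simp add: s_def)
    finally show "q \<bullet> y k + y k \<bullet> (Q *v y k) = c" .
  qed
  define h where "h k = s k / (real k)^2" for k :: nat
  have lim_h: "(h \<longlongrightarrow> \<kappa>) sequentially"
  proof -
    have L1: "((\<lambda>k. (c * (1 / real k)^2 - a - b * (1 / real k)) / (\<sigma> * \<delta>)) \<longlongrightarrow> (c * 0^2 - a - b * 0) / (\<sigma> * \<delta>)) sequentially"
      using sd0 by (intro tendsto_intros lim_1_over_n)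
    have E1: "eventually (\<lambda>k. (c * (1 / real k)^2 - a - b * (1 / real k)) / (\<sigma> * \<delta>) = h k) sequentially"
      using eventually_gt_at_top[of 0]
    proof eventually_elim
      case (elim k)
      then have k0: "real k \<noteq> 0" by simp
      have "c * (1 / real k)^2 - a - b * (1 / real k) = (c - a * (real k)^2 - b * real k) / (real k)^2"
        using k0 by (simp add: field_simps power2_eq_square)
      then show ?case by (simp only: h_def s_def divide_divide_eq_left mult.commute)
    qed
    have "(c * 0^2 - a - b * 0) / (\<sigma> * \<delta>) = \<kappa>" by (simp add: \<kappa>_def)
    then show ?thesis using tendsto_cong[OF E1] L1 by simp
  qed
  have evh: "eventually (\<lambda>k. h k > 0) sequentially" using order_tendstoD(1)[OF lim_h \<kappa>0] .
  have lim_s: "((\<lambda>k. 1 / s k) \<longlongrightarrow> 0) sequentially"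
  proof -
    have "((\<lambda>k. (1 / real k)^2 / h k) \<longlongrightarrow> 0^2 / \<kappa>) sequentially"
      using \<kappa>0 by (intro tendsto_intros lim_1_over_n lim_h) simp
    moreover have "eventually (\<lambda>k. (1 / real k)^2 / h k = 1 / s k) sequentially"
      using eventually_gt_at_top[of 0] by eventually_elim (simp add: h_def power2_eq_square)
    ultimately show ?thesis using tendsto_cong by fastforce
  qed
  have lim_ks: "((\<lambda>k. real k / s k) \<longlongrightarrow> 0) sequentially"
  proof -
    have "((\<lambda>k. (1 / real k) / h k) \<longlongrightarrow> 0 / \<kappa>) sequentially"
      using \<kappa>0 by (intro tendsto_intros lim_1_over_n lim_h) simp
    moreover have "eventually (\<lambda>k. (1 / real k) / h k = real k / s k) sequentially"
      using eventually_gt_at_top[of 0] by eventually_elim (simp add: h_def power2_eq_square)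
    ultimately show ?thesis using tendsto_cong by fastforce
  qed
  have lim_y: "((\<lambda>k. (1 / s k) *\<^sub>R y k) \<longlongrightarrow> \<sigma> *\<^sub>R d) sequentially"
  proof -
    have "((\<lambda>k. \<sigma> *\<^sub>R d + (real k / s k) *\<^sub>R e) \<longlongrightarrow> \<sigma> *\<^sub>R d + 0 *\<^sub>R e) sequentially"
      by (intro tendsto_intros lim_ks)
    moreover have "eventually (\<lambda>k. \<sigma> *\<^sub>R d + (real k / s k) *\<^sub>R e = (1 / s k) *\<^sub>R y k) sequentially"
      using evh
    proof eventually_elim
      case (elim k)
      then have "s k \<noteq> 0" by (auto simp: h_def)
      then show ?case by (simp add: y_def scaleR_add_right)
    qed
    ultimately show ?thesis using tendsto_cong by fastforce
  qed
  have "outer (hom 0 (\<sigma> *\<^sub>R d)) = outer (hom 0 d)"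
  proof -
    have "hom 0 (\<sigma> *\<^sub>R d) = \<sigma> *\<^sub>R hom 0 d" by (simp add: hom_scale)
    then show ?thesis using s2 by (simp add: outer_scale power2_eq_square)
  qed
  then show ?thesis using g lim_s lim_y by blast
qed


lemma asym:
  fixes Q :: "real^'n^'n" and q d y0 :: "real^'n"
  assumes sym: "transpose Q = Q" and Q0: "Q \<noteq> 0" and dd: "d \<bullet> (Q *v d) = 0"
  shows "\<exists>y s w. eventually (\<lambda>k. q \<bullet> y k + y k \<bullet> (Q *v y k) = q \<bullet> y0 + y0 \<bullet> (Q *v y0)) sequentially
     \<and> ((\<lambda>k. 1 / s k) \<longlongrightarrow> 0) sequentially \<and> ((\<lambda>k. (1 / s k) *\<^sub>R y k) \<longlongrightarrow> w) sequentially
     \<and> outer (hom 0 w) = outer (hom 0 d)"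
proof (cases "\<exists>v. d \<bullet> (Q *v v) \<noteq> 0")
  case True
  then obtain v where "d \<bullet> (Q *v v) \<noteq> 0" by blast
  then show ?thesis using asym_b[OF sym dd] by blast
next
  case False
  then have Bd: "\<And>v. d \<bullet> (Q *v v) = 0" by blast
  show ?thesis
  proof (cases "q \<bullet> d = 0")
    case True
    then show ?thesis using asym_a[OF sym Bd] by blast
  next
    case False
    obtain e where "e \<bullet> (Q *v e) \<noteq> 0" using polar[OF sym Q0] by blast
    then show ?thesis using asym_c[OF sym Bd False] by blast
  qed
qed

lemma frob_sum_list: "frob G (sum_list (map f xs)) = sum_list (map (\<lambda>v. frob G (f v)) xs)"
  by (induction xs) (simp_all add: frob_add frob_zero)

lemma sum_list_filter_split:
  "sum_list (map f xs) = sum_list (map f (filter P xs)) + sum_list (map f (filter (\<lambda>x. \<not> P x) xs))"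
  for f :: "'a \<Rightarrow> 'b::ab_group_add"
  by (induction xs) (simp_all add: algebra_simps)

lemma frob_diff1: "frob (A - B) X = frob A X - frob B X"
  by (simp add: frob_def left_diff_distrib sum_subtractf)
lemma frob_scale1: "frob (c *\<^sub>R A) X = c * frob A X"
  by (simp add: frob_def sum_distrib_left mult_ac)

lemma frob_E: "frob (homog_mat 1 0 0) Y = Y $ None $ None"
  by (simp add: frob_def sum_option homog_mat_def)

lemma sum_list_nth_None: "(sum_list (map outer xs)) $ None $ None = sum_list (map (\<lambda>v. (v $ None)^2) xs)"
  by (induction xs) (simp_all add: power2_eq_square)

lemma sum_list_convex_hull:
  fixes z :: "'a \<Rightarrow> 'b::real_vector"
  assumes "sum_list (map w xs) = 1" "\<And>x. x \<in> set xs \<Longrightarrow> w x \<ge> 0" "\<And>x. x \<in> set xs \<Longrightarrow> z x \<in> S"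
  shows "sum_list (map (\<lambda>x. w x *\<^sub>R z x) xs) \<in> convex hull S"
proof -
  have "sum_list (map (\<lambda>x. w x *\<^sub>R z x) xs) = (\<Sum>i\<in>{..<length xs}. w (xs!i) *\<^sub>R z (xs!i))"
    by (simp add: sum_list_sum_nth atLeast0LessThan)
  also have "\<dots> \<in> convex hull S"
  proof (rule convex_sum)
    show "(\<Sum>i\<in>{..<length xs}. w (xs!i)) = 1" using assms(1) by (simp add: sum_list_sum_nth atLeast0LessThan)
  qed (use assms in \<open>auto intro: hull_inc\<close>)
  finally show ?thesis .
qed

lemma part2_sub:
  fixes q1 :: "real^'n" and Q1 :: "real^'n^'n" and bl bu :: ereal
  assumes sym: "transpose Q1 = Q1" and Q0: "Q1 \<noteq> 0"
  shows "C_rel q1 Q1 bl bu \<subseteq> closure (convex hull (C_set q1 Q1 bl bu))"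
proof
  fix X assume XC: "X \<in> C_rel q1 Q1 bl bu"
  let ?A = "homog_mat 0 q1 Q1"
  let ?C = "C_set q1 Q1 bl bu"
  define S where "S = closure (convex hull ?C)"
  have clS: "closed S" unfolding S_def by (rule closed_closure)
  have cvS: "convex S" unfolding S_def by (intro convex_closure convex_convex_hull)
  have hS: "convex hull ?C \<subseteq> S" unfolding S_def by (rule closure_subset)
  have CS: "?C \<subseteq> S" using hull_subset[of ?C convex] hS by blast
  from XC have X: "psd X" and XNN: "X $ None $ None = 1" and bl: "bl \<le> ereal (frob ?A X)"
    and bu: "ereal (frob ?A X) \<le> bu" by (auto simp: C_rel_def)
  define c where "c = frob ?A X"
  define g where "g x = q1 \<bullet> x + x \<bullet> (Q1 *v x)" for x
  have gC: "outer (hom 1 x) \<in> ?C" if "g x = c" for x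
    using hom_in_C[of bl q1 x Q1 bu] that bl bu by (simp add: g_def c_def)
  define G where "G = ?A - c *\<^sub>R homog_mat 1 0 0"
  have phiG: "frob G (outer v) = frob ?A (outer v) - c * (v $ None)^2" for v
    by (simp add: G_def frob_diff1 frob_scale1 frob_E power2_eq_square)
  obtain ps where ps: "X = sum_list (map outer ps)" using psd_dec[OF X] by blast
  have "sum_list (map (\<lambda>v. frob G (outer v)) ps) = frob G X" by (simp add: ps frob_sum_list)
  also have "\<dots> = 0" by (simp add: G_def frob_diff1 frob_scale1 frob_E XNN c_def)
  finally obtain qs where qs: "sum_list (map outer qs) = X" and qs0: "\<And>q. q \<in> set qs \<Longrightarrow> frob G (outer q) = 0"
    using SZ[of G ps] ps by metis
  have fA: "frob ?A (outer v) = c * (v $ None)^2" if "v \<in> set qs" for v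
    using qs0[OF that] by (simp add: phiG)
  define T1 where "T1 = filter (\<lambda>v. v $ None \<noteq> 0) qs"
  define T2 where "T2 = filter (\<lambda>v. \<not> v $ None \<noteq> 0) qs"
  have Xsplit: "X = sum_list (map outer T1) + sum_list (map outer T2)"
    unfolding T1_def T2_def qs[symmetric] by (rule sum_list_filter_split)
  define xv :: "real^('n option) \<Rightarrow> real^'n" where "xv v = (1 / v $ None) *\<^sub>R tl_v v" for v
  have hom_xv: "hom 1 (xv v) = (1 / v $ None) *\<^sub>R v" if "v $ None \<noteq> 0" for v
    using that hom_scale[of "1 / v $ None" "v $ None" "tl_v v"] by (simp add: xv_def hom_tl)
  have outer_v: "outer v = (v $ None)^2 *\<^sub>R outer (hom 1 (xv v))" if "v $ None \<noteq> 0" for v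
    using that by (simp add: hom_xv outer_scale power2_eq_square)
  have g_xv: "g (xv v) = c" if "v \<in> set T1" for v
  proof -
    have v: "v \<in> set qs" "v $ None \<noteq> 0" using that by (auto simp: T1_def)
    have "(v $ None)^2 * g (xv v) = frob ?A (outer v)"
      using v(2) by (simp add: outer_v[OF v(2)] frob_scale g_hom g_def)
    also have "\<dots> = (v $ None)^2 * c" using fA[OF v(1)] by simp
    finally show ?thesis using v(2) by simp
  qed
  have w1: "sum_list (map (\<lambda>v. (v $ None)^2) T1) = 1"
  proof -
    have "sum_list (map (\<lambda>v. (v $ None)^2) qs) = 1" using XNN qs sum_list_nth_None[of qs] by simp
    moreover have "sum_list (map (\<lambda>v. (v $ None)^2) T2) = 0"
    proof -
      have "map (\<lambda>v. (v $ None)^2) T2 = map (\<lambda>v. 0) T2" by (intro map_cong) (auto simp: T2_def)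
      then show ?thesis by (simp add: sum_list_replicate map_replicate_const)
    qed
    ultimately show ?thesis using sum_list_filter_split[of "\<lambda>v. (v $ None)^2" qs "\<lambda>v. v $ None \<noteq> 0"]
      by (simp add: T1_def T2_def)
  qed
  have Y1: "sum_list (map outer T1) \<in> convex hull ?C"
  proof -
    have "sum_list (map outer T1) = sum_list (map (\<lambda>v. (v $ None)^2 *\<^sub>R outer (hom 1 (xv v))) T1)"
      by (intro arg_cong[where f = sum_list] map_cong refl outer_v) (simp add: T1_def)
    also have "\<dots> \<in> convex hull ?C"
      by (rule sum_list_convex_hull[OF w1]) (auto intro: gC g_xv)
    finally show ?thesis .
  qed
  have "T1 \<noteq> []" using w1 by auto
  then obtain v0 where v0: "v0 \<in> set T1" by (cases T1) auto
  define y0 where "y0 = xv v0"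
  have gy0: "g y0 = c" using g_xv[OF v0] by (simp add: y0_def)
  have rec: "Z + outer v \<in> S" if "Z \<in> S" "v \<in> set T2" for Z v
  proof -
    have v: "v \<in> set qs" "v $ None = 0" using that(2) by (auto simp: T2_def)
    have vh: "v = hom 0 (tl_v v)" using hom_tl[of v] v(2) by simp
    have dd: "tl_v v \<bullet> (Q1 *v tl_v v) = 0"
      using fA[OF v(1)] v(2) frob_hom[of 0 q1 Q1 v] by simp
    obtain y s w where ev: "eventually (\<lambda>k. g (y k) = g y0) sequentially"
      and s: "((\<lambda>k. 1 / s k) \<longlongrightarrow> 0) sequentially" and yw: "((\<lambda>k. (1 / s k) *\<^sub>R y k) \<longlongrightarrow> w) sequentially"
      and ow: "outer (hom 0 w) = outer (hom 0 (tl_v v))"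
      using asym[OF sym Q0 dd, of q1 y0] unfolding g_def by blast
    have "eventually (\<lambda>k. outer (hom 1 (y k)) \<in> ?C) sequentially"
      using ev by eventually_elim (simp add: gy0 gC)
    from REC[OF clS cvS CS that(1) this s yw] have "Z + outer (hom 0 w) \<in> S" .
    then show ?thesis using ow vh by metis
  qed
  have "Z + sum_list (map outer L) \<in> S" if "Z \<in> S" "set L \<subseteq> set T2" for Z L
    using that
  proof (induction L arbitrary: Z)
    case Nil then show ?case by simp
  next
    case (Cons v L)
    have "Z + outer v \<in> S" using rec Cons.prems by simp
    then have "Z + outer v + sum_list (map outer L) \<in> S" using Cons.IH Cons.prems by simp
    then show ?case by (simp add: add.assoc)
  qed
  then have "sum_list (map outer T1) + sum_list (map outer T2) \<in> S" using Y1 hS by blast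
  then show "X \<in> closure (convex hull ?C)" using Xsplit by (simp add: S_def)
qed


theorem corollary6:
  fixes q1 :: "real^'n" and Q1 :: "real^'n^'n" and bl bu :: ereal
  assumes "transpose Q1 = Q1" and "bl \<le> bu"
  shows "(\<forall>X. X extreme_point_of C_rel q1 Q1 bl bu \<longrightarrow> X \<in> C_set q1 Q1 bl bu)
       \<and> ((Q1 \<noteq> 0 \<and> bl \<noteq> -\<infinity> \<and> bu \<noteq> \<infinity>) \<longrightarrow>
            C_rel q1 Q1 bl bu = closure (convex hull (C_set q1 Q1 bl bu)))"
proof (intro conjI allI impI)
  fix X assume "X extreme_point_of C_rel q1 Q1 bl bu"
  then show "X \<in> C_set q1 Q1 bl bu" by (rule part1)
next
  assume "Q1 \<noteq> 0 \<and> bl \<noteq> -\<infinity> \<and> bu \<noteq> \<infinity>"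
  then have "Q1 \<noteq> 0" by simp
  then show "C_rel q1 Q1 bl bu = closure (convex hull (C_set q1 Q1 bl bu))"
    using part2_sub[OF assms(1)] part2_sup by blast
qed

end
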